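(* Let $k,l\ge1$ with $k\ne l$, $1\le r\le(2k+1)(2l+1)$, $\mathcal{B}=\mathcal{B}(2k+1,2l+1;r)$ and $G=\langle H,V\rangle$. Then \[|\mathcal{O}_G(\mathcal{B})|=\frac14\left(\binom{(2k+1)(2l+1)}{r}+\binom{2kl+k+l}{\lfloor\frac r2\rfloor}+\sum_{t=0}^{r}\binom{2k+1}{t}\binom{2kl+l}{\frac{r-t}{2}}+\sum_{t=0}^{r}\binom{2l+1}{t}\binom{2kl+k}{\frac{r-t}{2}}\right).\]
   Context: $\mathcal{B}(2k+1,2l+1;r)$ is the set of all subsets of exactly $r$ cells (boards with $r$ blocked cells) of a grid with $2k+1$ rows and $2l+1$ columns. $\langle H,V\rangle=\{R_0,H,V,R_{180}\}$ is the group generated by the reflections $H$, $V$ across the horizontal and vertical midlines (with $R_{180}$ the 180-degree rotation), acting on boards; $\mathcal{O}_G(\mathcal{B})$ is the set of orbits. Convention: $\binom{a}{b}=0$ when $b$ is not a nonnegative integer or $b>a$. *)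

theory Defs
  imports Complex_Main
begin

definition grid :: "nat \<Rightarrow> nat \<Rightarrow> (nat \<times> nat) set" where
  "grid k l = {0..<2*k+1} \<times> {0..<2*l+1}"

definition boards :: "nat \<Rightarrow> nat \<Rightarrow> nat \<Rightarrow> (nat \<times> nat) set set" where
  "boards k l r = {B. B \<subseteq> grid k l \<and> card B = r}"

definition reflH :: "nat \<Rightarrow> nat \<Rightarrow> nat \<times> nat \<Rightarrow> nat \<times> nat" where
  "reflH k l = (\<lambda>(i, j). (2*k - i, j))"

definition reflV :: "nat \<Rightarrow> nat \<Rightarrow> nat \<times> nat \<Rightarrow> nat \<times> nat" where
  "reflV k l = (\<lambda>(i, j). (i, 2*l - j))"

definition groupHV :: "nat \<Rightarrow> nat \<Rightarrow> (nat \<times> nat \<Rightarrow> nat \<times> nat) set" where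
  "groupHV k l = {id, reflH k l, reflV k l, reflH k l \<circ> reflV k l}"

definition orbitHV :: "nat \<Rightarrow> nat \<Rightarrow> (nat \<times> nat) set \<Rightarrow> (nat \<times> nat) set set" where
  "orbitHV k l B = {g ` B | g. g \<in> groupHV k l}"

definition orbitsHV :: "nat \<Rightarrow> nat \<Rightarrow> nat \<Rightarrow> (nat \<times> nat) set set set" where
  "orbitsHV k l r = orbitHV k l ` boards k l r"

(* binomial a choose (m/2), with the convention that it is 0 when m/2 is not an integer *)
definition choose_half :: "nat \<Rightarrow> nat \<Rightarrow> nat" where
  "choose_half a m = (if even m then a choose (m div 2) else 0)"

end

theory Submission
  imports Defs
begin

definition pxor :: "bool \<times> bool \<Rightarrow> bool \<times> bool \<Rightarrow> bool \<times> bool" where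
  "pxor p q = (fst p \<noteq> fst q, snd p \<noteq> snd q)"

lemma pxor_props:
  "pxor q (pxor q p) = p" "pxor q q = (False, False)" "pxor (pxor p q) q = p"
  by (auto simp: pxor_def prod_eq_iff)

lemma card_bool_pair: "card (UNIV :: (bool \<times> bool) set) = 4"
proof -
  have "card (UNIV :: (bool \<times> bool) set) = card (UNIV :: bool set) * card (UNIV :: bool set)"
    by (metis UNIV_Times_UNIV card_cartesian_product)
  then show ?thesis by simp
qed

lemma burnside4:
  fixes act :: "bool \<times> bool \<Rightarrow> 'a \<Rightarrow> 'a" and X :: "'a set"
  assumes fin: "finite X"
    and cl: "\<And>p x. x \<in> X \<Longrightarrow> act p x \<in> X"
    and idp: "\<And>x. x \<in> X \<Longrightarrow> act (False,False) x = x"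
    and cmp: "\<And>p q x. x \<in> X \<Longrightarrow> act p (act q x) = act (pxor p q) x"
  shows "4 * card ((\<lambda>x. range (\<lambda>p. act p x)) ` X) = (\<Sum>p\<in>UNIV. card {x\<in>X. act p x = x})"
proof -
  define orb where "orb x = range (\<lambda>p. act p x)" for x
  define stab where "stab x = {p. act p x = x}" for x
  have os: "card (orb x) * card (stab x) = 4" if xX: "x \<in> X" for x
  proof -
    have fib: "card {p. act p x = y} = card (stab x)" if yo: "y \<in> orb x" for y
    proof -
      obtain q where y: "y = act q x" using yo by (auto simp: orb_def)
      have "bij_betw (pxor q) (stab x) {p. act p x = y}"
        unfolding bij_betw_def
      proof
        show "inj_on (pxor q) (stab x)"
          by (metis inj_onI pxor_props(1))
        show "pxor q ` stab x = {p. act p x = y}"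
        proof (rule set_eqI, rule iffI)
          fix p assume "p \<in> pxor q ` stab x"
          then obtain s where s: "s \<in> stab x" "p = pxor q s" by auto
          have "act p x = act q (act s x)" using cmp[OF xX] s by simp
          also have "\<dots> = y" using s y stab_def by simp
          finally show "p \<in> {p. act p x = y}" by simp
        next
          fix p assume "p \<in> {p. act p x = y}"
          then have py: "act p x = act q x" using y by simp
          have "act (pxor q p) x = act q (act p x)" using cmp[OF xX] by simp
          also have "\<dots> = act q (act q x)" using py by simp
          also have "\<dots> = x" using cmp[OF xX] idp[OF xX] pxor_props(2) by simp
          finally have "pxor q p \<in> stab x" by (simp add: stab_def)
          then show "p \<in> pxor q ` stab x" using pxor_props(1)[of q p] by (metis image_eqI)
        qed
      qed
      then show ?thesis by (simp add: bij_betw_same_card)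
    qed
    have U: "(UNIV::(bool\<times>bool) set) = (\<Union>y\<in>orb x. {p. act p x = y})" by (auto simp: orb_def)
    have "card (UNIV::(bool\<times>bool) set) = (\<Sum>y\<in>orb x. card {p. act p x = y})"
      by (subst U, rule card_UN_disjoint) (auto simp: orb_def)
    also have "\<dots> = (\<Sum>y\<in>orb x. card (stab x))" using fib by simp
    finally show ?thesis using card_bool_pair by simp
  qed
  have orb_eq: "orb y = orb x" if xy: "x \<in> X" "y \<in> orb x" for x y
  proof -
    obtain q where y: "y = act q x" using xy(2) by (auto simp: orb_def)
    show ?thesis
    proof
      show "orb y \<subseteq> orb x" using y cmp[OF that(1)] by (auto simp: orb_def)
      show "orb x \<subseteq> orb y"
      proof
        fix z assume "z \<in> orb x"
        then obtain p where z: "z = act p x" by (auto simp: orb_def)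
        have "act (pxor p q) y = act p x" using y cmp[OF that(1)] pxor_props(3) by simp
        then show "z \<in> orb y" using z unfolding orb_def by (metis rangeI)
      qed
    qed
  qed
  have xin: "x \<in> orb x" if "x \<in> X" for x
    using idp[OF that] unfolding orb_def by (metis rangeI)
  have orbX: "orb x \<subseteq> X" if "x \<in> X" for x using cl that by (auto simp: orb_def)
  have finorb: "finite (orb x)" for x by (simp add: orb_def)
  have XU: "X = \<Union>(orb ` X)" using xin orbX by blast
  have s1: "(\<Sum>p\<in>UNIV. card {x\<in>X. act p x = x}) = card (SIGMA p:UNIV. {x\<in>X. act p x = x})"
    using fin by (simp add: card_SigmaI)
  also have "\<dots> = card (SIGMA x:X. stab x)"
  proof (rule bij_betw_same_card[of prod.swap])
    show "bij_betw prod.swap (SIGMA p:UNIV. {x \<in> X. act p x = x}) (SIGMA x:X. stab x)"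
      by (rule bij_betw_byWitness[where f'=prod.swap]) (auto simp: stab_def)
  qed
  also have "\<dots> = (\<Sum>x\<in>X. card (stab x))"
    using fin by (simp add: card_SigmaI)
  also have "\<dots> = (\<Sum>x\<in>\<Union>(orb ` X). card (stab x))"
    by (rule arg_cong[OF XU])
  also have "\<dots> = (\<Sum>Ob\<in>orb ` X. \<Sum>x\<in>Ob. card (stab x))"
  proof -
    have fa: "\<forall>A\<in>orb ` X. finite A" using finorb by auto
    have dj: "\<forall>A\<in>orb ` X. \<forall>B\<in>orb ` X. A \<noteq> B \<longrightarrow> A \<inter> B = {}"
    proof (intro ballI impI)
      fix A B assume A: "A \<in> orb ` X" and B: "B \<in> orb ` X" and ne: "A \<noteq> B"
      obtain a where a: "a \<in> X" "A = orb a" using A by auto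
      obtain b where b: "b \<in> X" "B = orb b" using B by auto
      show "A \<inter> B = {}"
      proof (rule ccontr)
        assume "A \<inter> B \<noteq> {}"
        then obtain z where za: "z \<in> orb a" and zb: "z \<in> orb b" using a b by auto
        have "orb z = orb a" "orb z = orb b" using orb_eq[OF a(1) za] orb_eq[OF b(1) zb] by simp_all
        then show False using ne a b by simp
      qed
    qed
    from sum.Union_disjoint[OF fa dj] show ?thesis by simp
  qed
  also have "\<dots> = (\<Sum>Ob\<in>orb ` X. 4)"
  proof (rule sum.cong[OF refl])
    fix Ob assume "Ob \<in> orb ` X"
    then obtain x where x: "x \<in> X" "Ob = orb x" by auto
    have st: "card Ob * card (stab y) = 4" if "y \<in> Ob" for y
    proof -
      have "y \<in> orb x" using x(2) that by simp
      then have "orb y = orb x" by (rule orb_eq[OF x(1)])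
      then have "orb y = Ob" using x(2) by simp
      moreover have "y \<in> X" using orbX x that by auto
      ultimately show ?thesis using os by metis
    qed
    have "card Ob * (\<Sum>y\<in>Ob. card (stab y)) = (\<Sum>y\<in>Ob. 4)"
      by (simp add: sum_distrib_left st)
    also have "\<dots> = card Ob * 4" by simp
    finally have "card Ob * (\<Sum>y\<in>Ob. card (stab y)) = card Ob * 4" .
    moreover have "card Ob > 0" using x xin finorb by (metis card_gt_0_iff empty_iff)
    ultimately show "(\<Sum>y\<in>Ob. card (stab y)) = 4" by simp
  qed
  also have "\<dots> = 4 * card (orb ` X)" by simp
  finally have fe: "(\<Sum>p\<in>UNIV. card {x\<in>X. act p x = x}) = 4 * card (orb ` X)" .
  have oe: "orb = (\<lambda>x. range (\<lambda>p. act p x))" by (rule ext) (simp add: orb_def)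
  show ?thesis using fe unfolding oe by (rule sym)
qed

lemma count_inv:
  fixes \<sigma> :: "'a \<Rightarrow> 'a"
  assumes finS: "finite S" and FS: "F \<subseteq> S" and AS: "A \<subseteq> S"
    and cl: "\<And>x. x \<in> S \<Longrightarrow> \<sigma> x \<in> S"
    and inv: "\<And>x. x \<in> S \<Longrightarrow> \<sigma> (\<sigma> x) = x"
    and fixF: "\<And>x. x \<in> F \<Longrightarrow> \<sigma> x = x"
    and FA: "F \<inter> A = {}"
    and Aout: "\<And>x. x \<in> A \<Longrightarrow> \<sigma> x \<notin> A"
    and cov: "\<And>x. x \<in> S \<Longrightarrow> x \<in> F \<or> x \<in> A \<or> \<sigma> x \<in> A"
  shows "card {B. B \<subseteq> S \<and> card B = r \<and> \<sigma> ` B = B}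
         = (\<Sum>t=0..r. (card F choose t) * choose_half (card A) (r - t))"
proof -
  have finF: "finite F" using finS FS finite_subset by blast
  have finA: "finite A" using finS AS finite_subset by blast
  have AF: "\<sigma> x \<notin> F" if "x \<in> A" for x
  proof
    assume "\<sigma> x \<in> F"
    then have "\<sigma> (\<sigma> x) = \<sigma> x" by (rule fixF)
    then have "x = \<sigma> x" using inv[of x] AS that by auto
    then show False using \<open>\<sigma> x \<in> F\<close> that FA by auto
  qed
  have cardT: "card (\<sigma> ` T) = card T" if "T \<subseteq> A" for T
  proof (rule card_image)
    show "inj_on \<sigma> T"
    proof (rule inj_onI)
      fix x y assume "x \<in> T" "y \<in> T" "\<sigma> x = \<sigma> y"
      then have "\<sigma> (\<sigma> x) = \<sigma> (\<sigma> y)" by simp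
      moreover have "x \<in> S" "y \<in> S" using \<open>x \<in> T\<close> \<open>y \<in> T\<close> that AS by auto
      ultimately show "x = y" using inv by metis
    qed
  qed
  define \<Phi> where "\<Phi> = (\<lambda>(M::'a set, T::'a set). M \<union> T \<union> \<sigma> ` T)"
  define P where "P = (\<Union>t\<in>{0..r}. {M. M \<subseteq> F \<and> card M = t} \<times> {T. T \<subseteq> A \<and> 2 * card T = r - t})"
  have cardPhi: "card (\<Phi> (M, T)) = card M + 2 * card T" if "M \<subseteq> F" "T \<subseteq> A" for M T
  proof -
    have fM: "finite M" using finF that finite_subset by blast
    have fT: "finite T" using finA that finite_subset by blast
    have d1: "M \<inter> T = {}" using that FA by auto
    have d2: "(M \<union> T) \<inter> \<sigma> ` T = {}" using that AF Aout by blast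
    have "card (\<Phi> (M, T)) = card (M \<union> T) + card (\<sigma> ` T)"
      unfolding \<Phi>_def using fM fT d2 by (simp add: card_Un_disjoint)
    also have "card (M \<union> T) = card M + card T" using fM fT d1 by (simp add: card_Un_disjoint)
    finally show ?thesis using cardT[OF that(2)] by simp
  qed
  have img: "{B. B \<subseteq> S \<and> card B = r \<and> \<sigma> ` B = B} = \<Phi> ` P"
  proof (rule set_eqI, rule iffI)
    fix B assume "B \<in> {B. B \<subseteq> S \<and> card B = r \<and> \<sigma> ` B = B}"
    then have BS: "B \<subseteq> S" and cB: "card B = r" and sB: "\<sigma> ` B = B" by auto
    define M where "M = B \<inter> F"
    define T where "T = B \<inter> A"
    have MF: "M \<subseteq> F" and TA: "T \<subseteq> A" unfolding M_def T_def by auto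
    have BPhi: "B = \<Phi> (M, T)"
    proof
      show "B \<subseteq> \<Phi> (M, T)"
      proof
        fix x assume xB: "x \<in> B"
        then have xS: "x \<in> S" using BS by auto
        from cov[OF xS] show "x \<in> \<Phi> (M, T)"
        proof (elim disjE)
          assume "x \<in> F" then show ?thesis using xB unfolding \<Phi>_def M_def by auto
        next
          assume "x \<in> A" then show ?thesis using xB unfolding \<Phi>_def T_def by auto
        next
          assume sx: "\<sigma> x \<in> A"
          have "\<sigma> x \<in> B" using sB xB by auto
          then have "\<sigma> x \<in> T" using sx unfolding T_def by auto
          moreover have "x = \<sigma> (\<sigma> x)" using inv[OF xS] by simp
          ultimately show ?thesis unfolding \<Phi>_def by auto
        qed
      qed
      show "\<Phi> (M, T) \<subseteq> B"
      proof -
        have "\<sigma> ` T \<subseteq> \<sigma> ` B" unfolding T_def by auto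
        then show ?thesis unfolding \<Phi>_def M_def T_def using sB by auto
      qed
    qed
    have "r = card M + 2 * card T" using cB BPhi cardPhi[OF MF TA] by simp
    then have "(M, T) \<in> P" unfolding P_def using MF TA by auto
    then show "B \<in> \<Phi> ` P" using BPhi by auto
  next
    fix B assume "B \<in> \<Phi> ` P"
    then obtain M T t where t: "t \<in> {0..r}" and MF: "M \<subseteq> F" and cM: "card M = t"
      and TA: "T \<subseteq> A" and cT: "2 * card T = r - t" and B: "B = \<Phi> (M, T)"
      unfolding P_def by auto
    have "B \<subseteq> S" unfolding B \<Phi>_def using MF TA FS AS cl by auto
    moreover have "card B = r" unfolding B using cardPhi[OF MF TA] cM cT t by auto
    moreover have "\<sigma> ` B = B"
    proof -
      have "\<sigma> ` M = M"
      proof -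
        have "\<sigma> ` M = id ` M" by (rule image_cong) (use MF fixF in auto)
        then show ?thesis by simp
      qed
      moreover have "\<sigma> ` \<sigma> ` T = T"
      proof -
        have "\<sigma> ` \<sigma> ` T = (\<sigma> \<circ> \<sigma>) ` T" by (simp add: image_comp)
        also have "\<dots> = id ` T" by (rule image_cong) (use TA AS inv in auto)
        finally show ?thesis by simp
      qed
      ultimately show ?thesis unfolding B \<Phi>_def by (auto simp: image_Un)
    qed
    ultimately show "B \<in> {B. B \<subseteq> S \<and> card B = r \<and> \<sigma> ` B = B}" by auto
  qed
  have inj: "inj_on \<Phi> P"
  proof (rule inj_onI)
    fix u v assume u: "u \<in> P" and v: "v \<in> P" and e: "\<Phi> u = \<Phi> v"
    obtain M T where uu: "u = (M, T)" "M \<subseteq> F" "T \<subseteq> A" using u unfolding P_def by auto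
    obtain M' T' where vv: "v = (M', T')" "M' \<subseteq> F" "T' \<subseteq> A" using v unfolding P_def by auto
    have kF: "\<Phi> (X, Y) \<inter> F = X" if "X \<subseteq> F" "Y \<subseteq> A" for X Y
      unfolding \<Phi>_def using that FA AF by blast
    have kA: "\<Phi> (X, Y) \<inter> A = Y" if "X \<subseteq> F" "Y \<subseteq> A" for X Y
      unfolding \<Phi>_def using that FA Aout by blast
    have "M = M'" using kF[OF uu(2,3)] kF[OF vv(2,3)] e uu(1) vv(1) by simp
    moreover have "T = T'" using kA[OF uu(2,3)] kA[OF vv(2,3)] e uu(1) vv(1) by simp
    ultimately show "u = v" using uu(1) vv(1) by simp
  qed
  have "card {B. B \<subseteq> S \<and> card B = r \<and> \<sigma> ` B = B} = card P"
    unfolding img using inj by (rule card_image)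
  also have "card P = (\<Sum>t\<in>{0..r}. card ({M. M \<subseteq> F \<and> card M = t} \<times> {T. T \<subseteq> A \<and> 2 * card T = r - t}))"
    unfolding P_def
  proof (rule card_UN_disjoint)
    show "finite {0..r}" by simp
    show "\<forall>i\<in>{0..r}. finite ({M. M \<subseteq> F \<and> card M = i} \<times> {T. T \<subseteq> A \<and> 2 * card T = r - i})"
      using finF finA by auto
    show "\<forall>i\<in>{0..r}. \<forall>j\<in>{0..r}. i \<noteq> j \<longrightarrow>
      ({M. M \<subseteq> F \<and> card M = i} \<times> {T. T \<subseteq> A \<and> 2 * card T = r - i}) \<inter>
      ({M. M \<subseteq> F \<and> card M = j} \<times> {T. T \<subseteq> A \<and> 2 * card T = r - j}) = {}"
      by auto
  qed
  also have "\<dots> = (\<Sum>t=0..r. (card F choose t) * choose_half (card A) (r - t))"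
  proof (rule sum.cong[OF refl])
    fix t
    have h: "card {T. T \<subseteq> A \<and> 2 * card T = r - t} = choose_half (card A) (r - t)"
    proof (cases "even (r - t)")
      case True
      have "{T. T \<subseteq> A \<and> 2 * card T = r - t} = {T. T \<subseteq> A \<and> card T = (r - t) div 2}"
        using True by auto
      then show ?thesis using True finA by (simp add: n_subsets choose_half_def)
    next
      case False
      have "\<forall>T::'a set. 2 * card T \<noteq> r - t" using False by (metis dvd_triv_left)
      then have e: "{T. T \<subseteq> A \<and> 2 * card T = r - t} = {}" by auto
      have "choose_half (card A) (r - t) = 0" using False by (simp add: choose_half_def)
      then show ?thesis by (subst e) simp
    qed
    show "card ({M. M \<subseteq> F \<and> card M = t} \<times> {T. T \<subseteq> A \<and> 2 * card T = r - t})
          = (card F choose t) * choose_half (card A) (r - t)"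
      using finF by (simp add: card_cartesian_product n_subsets h)
  qed
  finally show ?thesis .
qed

definition gp :: "nat \<Rightarrow> nat \<Rightarrow> bool \<times> bool \<Rightarrow> nat \<times> nat \<Rightarrow> nat \<times> nat" where
  "gp k l p = (if fst p then reflH k l else id) \<circ> (if snd p then reflV k l else id)"

lemma gp_grid: "x \<in> grid k l \<Longrightarrow> gp k l p x \<in> grid k l"
  by (cases x; cases p) (auto simp: gp_def grid_def reflH_def reflV_def)

lemma gp_comp: "x \<in> grid k l \<Longrightarrow> gp k l p (gp k l q x) = gp k l (pxor p q) x"
proof -
  assume xg: "x \<in> grid k l"
  obtain i j where x: "x = (i, j)" by (cases x)
  obtain a b where p: "p = (a, b)" by (cases p)
  obtain c d where q: "q = (c, d)" by (cases q)
  have ij: "i \<le> 2*k" "j \<le> 2*l" using xg x by (auto simp: grid_def)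
  show ?thesis unfolding x p q
    by (cases a; cases b; cases c; cases d) (use ij in \<open>auto simp: gp_def pxor_def reflH_def reflV_def\<close>)
qed

lemma gp_id: "gp k l (False, False) = id"
  by (simp add: gp_def)

lemma orbit_eq: "orbitHV k l B = range (\<lambda>p. gp k l p ` B)"
proof -
  have U: "(UNIV :: (bool \<times> bool) set) = {(False,False),(False,True),(True,False),(True,True)}"
    by auto
  have g: "range (gp k l) = groupHV k l"
    unfolding groupHV_def U by (simp add: gp_def insert_commute)
  have "range (\<lambda>p. gp k l p ` B) = (\<lambda>g. g ` B) ` range (gp k l)"
    by (simp only: image_comp comp_def)
  also have "\<dots> = (\<lambda>g. g ` B) ` groupHV k l" by (simp only: g)
  also have "\<dots> = orbitHV k l B" unfolding orbitHV_def by blast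
  finally show ?thesis by (rule sym)
qed

lemma boards_closed:
  assumes "B \<in> boards k l r" shows "gp k l p ` B \<in> boards k l r"
proof -
  have Bg: "B \<subseteq> grid k l" and cB: "card B = r" using assms by (auto simp: boards_def)
  have fg: "finite (grid k l)" by (simp add: grid_def)
  have fB: "finite B" using Bg fg finite_subset by blast
  have sub: "gp k l p ` B \<subseteq> grid k l" using Bg gp_grid by blast
  have bk: "gp k l p ` gp k l p ` B = B"
  proof -
    have "gp k l p ` gp k l p ` B = (\<lambda>x. gp k l (pxor p p) x) ` B"
      unfolding image_image
    proof (rule image_cong[OF refl])
      fix x assume "x \<in> B"
      then show "gp k l p (gp k l p x) = gp k l (pxor p p) x" using Bg by (intro gp_comp) auto
    qed
    then show ?thesis by (simp add: pxor_props gp_id)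
  qed
  have "card (gp k l p ` B) \<le> card B" using fB by (rule card_image_le)
  moreover have "card B \<le> card (gp k l p ` B)"
    using card_image_le[of "gp k l p ` B" "gp k l p"] fB bk by simp
  ultimately show ?thesis using sub cB by (simp add: boards_def)
qed

lemma fix_eq: "{B \<in> boards k l r. g ` B = B} = {B. B \<subseteq> grid k l \<and> card B = r \<and> g ` B = B}"
  by (auto simp: boards_def)

lemma card_grid: "card (grid k l) = (2*k+1)*(2*l+1)"
  by (simp add: grid_def card_cartesian_product)

lemma fixH: "card {B. B \<subseteq> grid k l \<and> card B = r \<and> reflH k l ` B = B}
   = (\<Sum>t=0..r. ((2*l+1) choose t) * choose_half (2*k*l+k) (r - t))"
proof -
  have "card {B. B \<subseteq> grid k l \<and> card B = r \<and> reflH k l ` B = B}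
    = (\<Sum>t=0..r. (card ({k} \<times> {0..<2*l+1}) choose t) * choose_half (card ({0..<k} \<times> {0..<2*l+1})) (r - t))"
    by (rule count_inv) (auto simp: grid_def reflH_def)
  moreover have c1: "card ({0..<k} \<times> {0..<2*l+1}) = 2*k*l+k"
    by (simp add: card_cartesian_product algebra_simps)
  moreover have c2: "card ({k} \<times> {0..<2*l+1}) = 2*l+1"
    by (simp add: card_cartesian_product)
  ultimately show ?thesis by (simp only:)
qed

lemma fixV: "card {B. B \<subseteq> grid k l \<and> card B = r \<and> reflV k l ` B = B}
   = (\<Sum>t=0..r. ((2*k+1) choose t) * choose_half (2*k*l+l) (r - t))"
proof -
  have "card {B. B \<subseteq> grid k l \<and> card B = r \<and> reflV k l ` B = B}
    = (\<Sum>t=0..r. (card ({0..<2*k+1} \<times> {l}) choose t) * choose_half (card ({0..<2*k+1} \<times> {0..<l})) (r - t))"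
    by (rule count_inv) (auto simp: grid_def reflV_def)
  moreover have c1: "card ({0..<2*k+1} \<times> {0..<l}) = 2*k*l+l"
    by (simp add: card_cartesian_product algebra_simps)
  moreover have c2: "card ({0..<2*k+1} \<times> {l}) = 2*k+1"
    by (simp add: card_cartesian_product)
  ultimately show ?thesis by (simp only:)
qed

lemma fixR:
  assumes "r \<ge> 1"
  shows "card {B. B \<subseteq> grid k l \<and> card B = r \<and> (reflH k l \<circ> reflV k l) ` B = B}
   = (2*k*l+k+l) choose (r div 2)"
proof -
  define A where "A = ({0..<k} \<times> {0..<2*l+1}) \<union> ({k} \<times> {0..<l})"
  have "card {B. B \<subseteq> grid k l \<and> card B = r \<and> (reflH k l \<circ> reflV k l) ` B = B}
    = (\<Sum>t=0..r. (card {(k,l)} choose t) * choose_half (card A) (r - t))"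
    by (rule count_inv) (auto simp: grid_def reflV_def reflH_def A_def)
  moreover have "card A = 2*k*l+k+l"
  proof -
    have "card A = card ({0..<k} \<times> {0..<2*l+1}) + card ({k} \<times> {0..<l})"
      unfolding A_def by (rule card_Un_disjoint) auto
    then show ?thesis by (simp add: card_cartesian_product algebra_simps)
  qed
  moreover have "(\<Sum>t=0..r. (1 choose t) * choose_half m (r - t)) = m choose (r div 2)" for m
  proof -
    have "(\<Sum>t=0..r. (1 choose t) * choose_half m (r - t)) = (\<Sum>t\<in>{0,1}. (1 choose t) * choose_half m (r - t))"
      by (rule sum.mono_neutral_right) (use assms in auto)
    also have "\<dots> = choose_half m r + choose_half m (r - 1)" by simp
    also have "\<dots> = m choose (r div 2)"
    proof (cases "even r")
      case True
      then have "odd (r - 1)" using assms by simp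
      then show ?thesis using True by (simp add: choose_half_def)
    next
      case False
      then obtain m' where r: "r = 2*m' + 1" by (metis oddE)
      then show ?thesis by (simp add: choose_half_def)
    qed
    finally show ?thesis .
  qed
  ultimately show ?thesis by simp
qed

theorem proposition5p4:
  fixes k l r :: nat
  assumes "k \<ge> 1" and "l \<ge> 1" and "k \<noteq> l"
    and "1 \<le> r" and "r \<le> (2*k+1)*(2*l+1)"
  shows "real (card (orbitsHV k l r)) =
    (1/4) * ( real (((2*k+1)*(2*l+1)) choose r)
            + real ((2*k*l+k+l) choose (r div 2))
            + (\<Sum>t=0..r. real ((2*k+1) choose t) * real (choose_half (2*k*l+l) (r - t)))
            + (\<Sum>t=0..r. real ((2*l+1) choose t) * real (choose_half (2*k*l+k) (r - t))))"
proof -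
  define act where "act = (\<lambda>p B. gp k l p ` B)"
  have fin: "finite (boards k l r)"
  proof -
    have "boards k l r \<subseteq> Pow (grid k l)" by (auto simp: boards_def)
    moreover have "finite (grid k l)" by (simp add: grid_def)
    ultimately show ?thesis by (meson finite_Pow_iff finite_subset)
  qed
  have main: "4 * card ((\<lambda>x. range (\<lambda>p. act p x)) ` boards k l r)
      = (\<Sum>p\<in>UNIV. card {x \<in> boards k l r. act p x = x})"
  proof (rule burnside4[OF fin])
    show "act p x \<in> boards k l r" if "x \<in> boards k l r" for p x
      unfolding act_def using that by (rule boards_closed)
    show "act (False, False) x = x" for x by (simp add: act_def gp_id)
    show "act p (act q x) = act (pxor p q) x" if xb: "x \<in> boards k l r" for p q x
    proof -
      have xg: "x \<subseteq> grid k l" using xb by (auto simp: boards_def)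
      show ?thesis unfolding act_def image_image
      proof (rule image_cong[OF refl])
        fix y assume "y \<in> x"
        then show "gp k l p (gp k l q y) = gp k l (pxor p q) y" using xg by (intro gp_comp) auto
      qed
    qed
  qed
  have orbs: "orbitsHV k l r = (\<lambda>x. range (\<lambda>p. act p x)) ` boards k l r"
  proof -
    have "orbitHV k l = (\<lambda>x. range (\<lambda>p. gp k l p ` x))" by (rule ext) (rule orbit_eq)
    then show ?thesis unfolding orbitsHV_def act_def by (simp only:)
  qed
  have U: "(UNIV :: (bool \<times> bool) set) = {(False,False),(False,True),(True,False),(True,True)}"
    by auto
  define f where "f p = card {x \<in> boards k l r. act p x = x}" for p
  have sumU: "(\<Sum>p\<in>UNIV. f p) = f (False,False) + f (False,True) + f (True,False) + f (True,True)"
    unfolding U by simp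
  have f1: "f (False,False) = ((2*k+1)*(2*l+1)) choose r"
  proof -
    have "{x \<in> boards k l r. act (False,False) x = x} = {B. B \<subseteq> grid k l \<and> card B = r}"
      by (auto simp: act_def gp_id boards_def)
    then show ?thesis unfolding f_def
      by (simp add: n_subsets card_grid[symmetric] grid_def)
  qed
  have f2: "f (False,True) = (\<Sum>t=0..r. ((2*k+1) choose t) * choose_half (2*k*l+l) (r - t))"
  proof -
    have "gp k l (False,True) = reflV k l" by (simp add: gp_def)
    then show ?thesis unfolding f_def act_def by (simp only: fix_eq fixV)
  qed
  have f3: "f (True,False) = (\<Sum>t=0..r. ((2*l+1) choose t) * choose_half (2*k*l+k) (r - t))"
  proof -
    have "gp k l (True,False) = reflH k l" by (simp add: gp_def)
    then show ?thesis unfolding f_def act_def by (simp only: fix_eq fixH)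
  qed
  have f4: "f (True,True) = (2*k*l+k+l) choose (r div 2)"
  proof -
    have "gp k l (True,True) = reflH k l \<circ> reflV k l" by (simp add: gp_def)
    then show ?thesis unfolding f_def act_def using fixR[OF assms(4)] by (simp only: fix_eq)
  qed
  have "4 * card (orbitsHV k l r) = f (False,False) + f (False,True) + f (True,False) + f (True,True)"
    using main sumU orbs unfolding f_def by simp
  then have "real (4 * card (orbitsHV k l r)) = real (f (False,False) + f (False,True) + f (True,False) + f (True,True))"
    by simp
  then have "4 * real (card (orbitsHV k l r)) = real (((2*k+1)*(2*l+1)) choose r)
      + real (\<Sum>t=0..r. ((2*k+1) choose t) * choose_half (2*k*l+l) (r - t))
      + real (\<Sum>t=0..r. ((2*l+1) choose t) * choose_half (2*k*l+k) (r - t))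
      + real ((2*k*l+k+l) choose (r div 2))"
    unfolding f1 f2 f3 f4 by simp
  then show ?thesis by (simp add: of_nat_sum)
qed

end
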